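(* Let $P$ be a finite poset with height function $h$. Then the $q$-Zeta polynomial of $P$ with the shifted height function $h+1$ is $$\mathsf{Z}_{P,h+1}(x)=\frac{1}{q}\big(1+(q-1)x\big)\,\mathsf{Z}_{P,h}(x).$$
   Context: $q$ is an indeterminate; $[n]_q=(q^n-1)/(q-1)$. A height function on a finite poset $P$ is $h:P\to\mathbb{N}$ with $h(x)<h(y)$ whenever $y$ covers $x$. The $q$-Zeta polynomial $\mathsf{Z}_{P,h}\in\mathbb{Q}(q)[x]$ is the unique polynomial with $\mathsf{Z}_{P,h}([n]_q)=\sum_{e_1\le\cdots\le e_{n-1}\text{ in }P}q^{h(e_1)+\cdots+h(e_{n-1})}$ for all integers $n\ge2$ (such a polynomial exists). *)

theory Defs
  imports "HOL-Computational_Algebra.Polynomial" "HOL-Computational_Algebra.Fraction_Field"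
begin

type_synonym ratfun = "rat poly fract"

definition qvar :: ratfun where
  "qvar = Fract [:0, 1:] 1"

definition qint :: "nat \<Rightarrow> ratfun" where
  "qint n = (\<Sum>i<n. qvar ^ i)"

definition covers :: "'a::order set \<Rightarrow> 'a \<Rightarrow> 'a \<Rightarrow> bool" where
  "covers P x y \<longleftrightarrow> x \<in> P \<and> y \<in> P \<and> x < y \<and> \<not> (\<exists>z\<in>P. x < z \<and> z < y)"

definition height_fun :: "'a::order set \<Rightarrow> ('a \<Rightarrow> nat) \<Rightarrow> bool" where
  "height_fun P h \<longleftrightarrow> (\<forall>x y. covers P x y \<longrightarrow> h x < h y)"

definition multichains :: "'a::order set \<Rightarrow> nat \<Rightarrow> 'a list set" where
  "multichains P k = {xs. set xs \<subseteq> P \<and> length xs = k \<and> sorted_wrt (\<le>) xs}"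

definition zeta_sum :: "'a::order set \<Rightarrow> ('a \<Rightarrow> nat) \<Rightarrow> nat \<Rightarrow> ratfun" where
  "zeta_sum P h n = (\<Sum>xs\<in>multichains P (n - 1). qvar ^ sum_list (map h xs))"

definition qzeta :: "'a::order set \<Rightarrow> ('a \<Rightarrow> nat) \<Rightarrow> ratfun poly" where
  "qzeta P h = (THE Z. \<forall>n\<ge>2. poly Z (qint n) = zeta_sum P h n)"

end

theory Submission
  imports Defs
begin

lemma qvar_pow: "qvar ^ n = Fract ([:0,1:] ^ n) 1"
  by (induction n) (auto simp: qvar_def One_fract_def)

lemma qvar_pow_inj: "qvar ^ m = qvar ^ n \<Longrightarrow> m = n"
proof -
  assume "qvar ^ m = qvar ^ n"
  then have "([:0,1:] ^ m :: rat poly) = [:0,1:] ^ n"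
    by (simp add: qvar_pow eq_fract)
  then have "degree ([:0,1:] ^ m :: rat poly) = degree ([:0,1:] ^ n :: rat poly)" by simp
  then show "m = n" by (simp add: degree_power_eq)
qed

lemma qvar_nz: "qvar \<noteq> 0"
  using qvar_pow_inj[of 1 2] by auto

lemma qvar_n1: "qvar \<noteq> 1"
  using qvar_pow_inj[of 1 0] by auto

lemma qint_eq: "1 + (qvar - 1) * qint n = qvar ^ n"
  using power_diff_1_eq[of qvar n] by (simp add: qint_def)

lemma qint_inj: "qint m = qint n \<Longrightarrow> m = n"
  using qint_eq[of m] qint_eq[of n] qvar_pow_inj by metis

lemma poly_unique:
  assumes "\<forall>n\<ge>2. poly Z1 (qint n) = poly Z2 (qint n)"
  shows "Z1 = Z2"
proof (rule ccontr)
  assume "Z1 \<noteq> Z2"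
  then have "Z1 - Z2 \<noteq> 0" by simp
  then have fin: "finite {x. poly (Z1 - Z2) x = 0}" by (rule poly_roots_finite)
  have "qint ` {2..} \<subseteq> {x. poly (Z1 - Z2) x = 0}" using assms by auto
  moreover have "infinite (qint ` {2::nat..})"
    using finite_imageD[of qint "{2::nat..}"] qint_inj
    by (metis infinite_Ici inj_onI)
  ultimately show False using fin finite_subset by blast
qed


definition mcs :: "'a::order set \<Rightarrow> ('a \<Rightarrow> nat) \<Rightarrow> nat \<Rightarrow> ratfun" where
  "mcs P h k = (\<Sum>xs\<in>multichains P k. qvar ^ sum_list (map h xs))"

lemma finite_mc: "finite P \<Longrightarrow> finite (multichains P k)"
  unfolding multichains_def
  by (rule finite_subset[OF _ finite_lists_length_eq[of P k]]) auto

lemma mc0: "multichains P 0 = {[]}"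
  by (auto simp: multichains_def)

lemma mcs0: "mcs P h 0 = 1"
  by (simp add: mcs_def mc0)

lemma mc_Suc: "multichains P (Suc k) =
   (\<lambda>(x,ys). x # ys) ` (SIGMA x:P. multichains {y\<in>P. x \<le> y} k)"
proof (rule set_eqI)
  fix xs
  show "xs \<in> multichains P (Suc k) \<longleftrightarrow> xs \<in> (\<lambda>(x,ys). x # ys) ` (SIGMA x:P. multichains {y\<in>P. x \<le> y} k)"
  proof
    assume "xs \<in> multichains P (Suc k)"
    then obtain x ys where "xs = x # ys" and "x \<in> P" "ys \<in> multichains {y\<in>P. x \<le> y} k"
      unfolding multichains_def by (cases xs) auto
    then show "xs \<in> (\<lambda>(x,ys). x # ys) ` (SIGMA x:P. multichains {y\<in>P. x \<le> y} k)" by force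
  next
    assume "xs \<in> (\<lambda>(x,ys). x # ys) ` (SIGMA x:P. multichains {y\<in>P. x \<le> y} k)"
    then show "xs \<in> multichains P (Suc k)"
      unfolding multichains_def by auto
  qed
qed

lemma mcs_Suc:
  assumes "finite P"
  shows "mcs P h (Suc k) = (\<Sum>x\<in>P. qvar ^ h x * mcs {y\<in>P. x \<le> y} h k)"
proof -
  have inj: "inj_on (\<lambda>(x,ys). x # ys) (SIGMA x:P. multichains {y\<in>P. x \<le> y} k)"
    by (auto simp: inj_on_def)
  have "mcs P h (Suc k) = (\<Sum>(x,ys)\<in>(SIGMA x:P. multichains {y\<in>P. x \<le> y} k).
          qvar ^ sum_list (map h (x # ys)))"
    unfolding mcs_def mc_Suc sum.reindex[OF inj] by (simp add: o_def case_prod_unfold)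
  also have "\<dots> = (\<Sum>x\<in>P. \<Sum>ys\<in>multichains {y\<in>P. x \<le> y} k. qvar ^ sum_list (map h (x # ys)))"
    using assms by (subst sum.Sigma) (auto intro: finite_mc)
  also have "\<dots> = (\<Sum>x\<in>P. qvar ^ h x * mcs {y\<in>P. x \<le> y} h k)"
    by (simp add: mcs_def sum_distrib_left power_add)
  finally show ?thesis .
qed

lemma mcs_min:
  assumes "finite Q" "x \<in> Q" "\<forall>y\<in>Q. x \<le> y"
  shows "mcs Q h (Suc k) = qvar ^ h x * mcs Q h k + mcs (Q - {x}) h (Suc k)"
proof -
  have "mcs Q h (Suc k) = qvar ^ h x * mcs {y\<in>Q. x \<le> y} h k
      + (\<Sum>y\<in>Q - {x}. qvar ^ h y * mcs {z\<in>Q. y \<le> z} h k)"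
    using assms by (simp add: mcs_Suc sum.remove)
  also have "{y\<in>Q. x \<le> y} = Q" using assms by auto
  also have "(\<Sum>y\<in>Q - {x}. qvar ^ h y * mcs {z\<in>Q. y \<le> z} h k)
      = (\<Sum>y\<in>Q - {x}. qvar ^ h y * mcs {z\<in>Q - {x}. y \<le> z} h k)"
  proof (rule sum.cong[OF refl])
    fix y assume y: "y \<in> Q - {x}"
    have "{z\<in>Q. y \<le> z} = {z\<in>Q - {x}. y \<le> z}"
      using y assms by (auto intro: order.antisym)
    then show "qvar ^ h y * mcs {z\<in>Q. y \<le> z} h k = qvar ^ h y * mcs {z\<in>Q - {x}. y \<le> z} h k"
      by simp
  qed
  also have "\<dots> = mcs (Q - {x}) h (Suc k)"
    using assms by (simp add: mcs_Suc)
  finally show ?thesis .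
qed

lemma mcs_shift:
  "mcs P (\<lambda>x. h x + 1) k = qvar ^ k * mcs P h k"
proof -
  have "\<And>xs::'a list. sum_list (map (\<lambda>x. h x + 1) xs) = sum_list (map h xs) + length xs"
    by (induct_tac xs) auto
  then show ?thesis unfolding mcs_def
    by (simp add: sum_distrib_left power_add multichains_def mult.commute)
qed


definition expo :: "nat set \<Rightarrow> (nat \<Rightarrow> ratfun) \<Rightarrow> bool" where
  "expo S g \<longleftrightarrow> (\<exists>b. \<forall>k. g (Suc k) = (\<Sum>c\<in>S. b c * (qvar ^ c) ^ k))"

lemma expo_cong: "expo S g \<Longrightarrow> (\<And>k. g (Suc k) = g' (Suc k)) \<Longrightarrow> expo S g'"
  unfolding expo_def by metis

lemma expo_zero: "expo S (\<lambda>_. 0)"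
  unfolding expo_def by (rule exI[of _ "\<lambda>_. 0"]) simp

lemma expo_add: "expo S f \<Longrightarrow> expo S g \<Longrightarrow> expo S (\<lambda>n. f n + g n)"
  unfolding expo_def
proof (elim exE)
  fix b1 b2
  assume "\<forall>k. f (Suc k) = (\<Sum>c\<in>S. b1 c * (qvar ^ c) ^ k)" "\<forall>k. g (Suc k) = (\<Sum>c\<in>S. b2 c * (qvar ^ c) ^ k)"
  then show "\<exists>b. \<forall>k. f (Suc k) + g (Suc k) = (\<Sum>c\<in>S. b c * (qvar ^ c) ^ k)"
    by (intro exI[of _ "\<lambda>c. b1 c + b2 c"]) (simp add: sum.distrib distrib_right)
qed

lemma expo_sum: "finite I \<Longrightarrow> (\<And>i. i \<in> I \<Longrightarrow> expo S (g i)) \<Longrightarrow> expo S (\<lambda>n. \<Sum>i\<in>I. g i n)"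
  by (induction I rule: finite_induct) (auto intro: expo_add expo_zero)

lemma expo_mono:
  assumes "expo S g" "finite T" "S \<subseteq> T"
  shows "expo T g"
proof -
  obtain b where b: "\<forall>k. g (Suc k) = (\<Sum>c\<in>S. b c * (qvar ^ c) ^ k)"
    using assms unfolding expo_def by blast
  have "(\<Sum>c\<in>T. (if c \<in> S then b c else 0) * (qvar ^ c) ^ k) = (\<Sum>c\<in>S. b c * (qvar ^ c) ^ k)" for k
  proof -
    have "(\<Sum>c\<in>T. (if c \<in> S then b c else 0) * (qvar ^ c) ^ k) = (\<Sum>c\<in>T. if c \<in> S then b c * (qvar ^ c) ^ k else 0)"
      by (rule sum.cong) auto
    also have "\<dots> = (\<Sum>c\<in>T \<inter> S. b c * (qvar ^ c) ^ k)"
      using assms by (simp add: sum.inter_restrict)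
    also have "T \<inter> S = S" using assms by auto
    finally show ?thesis .
  qed
  then show ?thesis using b unfolding expo_def by (intro exI[of _ "\<lambda>c. if c \<in> S then b c else 0"]) simp
qed

lemma expo_geo:
  assumes fin: "finite S" and d: "d \<notin> S" and f: "expo S f" and G0: "G 0 = 1"
    and GS: "\<And>k. G (Suc k) = qvar ^ d * G k + f (Suc k)"
  shows "expo (insert d S) (\<lambda>n. qvar ^ d * G (n - 1))"
proof -
  obtain b0 where b0: "\<And>k. f (Suc k) = (\<Sum>c\<in>S. b0 c * (qvar ^ c) ^ k)"
    using f unfolding expo_def by blast
  define a where "a = qvar ^ d"
  define Q where "Q c = qvar ^ c" for c
  define b where "b c = b0 c / Q c" for c
  have b: "f (Suc k) = (\<Sum>c\<in>S. b c * Q c * Q c ^ k)" for k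
    unfolding b0 by (rule sum.cong) (auto simp: b_def Q_def qvar_nz)
  have Qa: "c \<in> S \<Longrightarrow> Q c - a \<noteq> 0" for c
    using d qvar_pow_inj[of c d] unfolding Q_def a_def by auto
  have closed: "G k = a ^ k + (\<Sum>c\<in>S. b c * Q c / (Q c - a) * (Q c ^ k - a ^ k))" for k
  proof (induction k)
    case 0 then show ?case using G0 by simp
  next
    case (Suc k)
    have "G (Suc k) = a * G k + (\<Sum>c\<in>S. b c * Q c * Q c ^ k)"
      using GS[of k] b[of k] unfolding a_def by simp
    also have "\<dots> = a ^ Suc k + (\<Sum>c\<in>S. a * (b c * Q c / (Q c - a) * (Q c ^ k - a ^ k)) + b c * Q c * Q c ^ k)"
      using Suc by (simp add: distrib_left sum_distrib_left sum.distrib)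
    also have "(\<Sum>c\<in>S. a * (b c * Q c / (Q c - a) * (Q c ^ k - a ^ k)) + b c * Q c * Q c ^ k)
        = (\<Sum>c\<in>S. b c * Q c / (Q c - a) * (Q c ^ Suc k - a ^ Suc k))"
    proof (rule sum.cong[OF refl])
      fix c assume "c \<in> S"
      then have nz: "Q c - a \<noteq> 0" by (rule Qa)
      show "a * (b c * Q c / (Q c - a) * (Q c ^ k - a ^ k)) + b c * Q c * Q c ^ k
          = b c * Q c / (Q c - a) * (Q c ^ Suc k - a ^ Suc k)"
        using nz by (simp add: field_simps)
    qed
    finally show ?case .
  qed
  define B where "B c = (if c = d then a - (\<Sum>c\<in>S. b c * Q c / (Q c - a) * a)
                         else b c * Q c / (Q c - a) * a)" for c
  have "qvar ^ d * G k = (\<Sum>c\<in>insert d S. B c * (qvar ^ c) ^ k)" for k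
  proof -
    have "(\<Sum>c\<in>insert d S. B c * (qvar ^ c) ^ k) = B d * a ^ k + (\<Sum>c\<in>S. B c * Q c ^ k)"
      using fin d by (simp add: a_def Q_def)
    also have "(\<Sum>c\<in>S. B c * Q c ^ k) = (\<Sum>c\<in>S. b c * Q c / (Q c - a) * a * Q c ^ k)"
      using d by (intro sum.cong) (auto simp: B_def)
    finally have e: "(\<Sum>c\<in>insert d S. B c * (qvar ^ c) ^ k) =
        (a - (\<Sum>c\<in>S. b c * Q c / (Q c - a) * a)) * a ^ k + (\<Sum>c\<in>S. b c * Q c / (Q c - a) * a * Q c ^ k)"
      by (simp add: B_def)
    have "qvar ^ d * G k = a * a ^ k + (\<Sum>c\<in>S. a * (b c * Q c / (Q c - a) * (Q c ^ k - a ^ k)))"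
      using closed[of k] by (simp add: a_def distrib_left sum_distrib_left)
    also have "\<dots> = a * a ^ k + (\<Sum>c\<in>S. b c * Q c / (Q c - a) * a * Q c ^ k - b c * Q c / (Q c - a) * a * a ^ k)"
    proof -
      have gen: "\<And>X y z::ratfun. a*(X*(y-z)) = X*a*y - X*a*z" by (simp add: algebra_simps)
      show ?thesis by (simp only: gen)
    qed
    also have "\<dots> = (a - (\<Sum>c\<in>S. b c * Q c / (Q c - a) * a)) * a ^ k + (\<Sum>c\<in>S. b c * Q c / (Q c - a) * a * Q c ^ k)"
    proof -
      have s1: "(\<Sum>c\<in>S. b c * Q c / (Q c - a) * a * Q c ^ k - b c * Q c / (Q c - a) * a * a ^ k)
        = (\<Sum>c\<in>S. b c * Q c / (Q c - a) * a * Q c ^ k) - (\<Sum>c\<in>S. b c * Q c / (Q c - a) * a) * a ^ k"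
        by (simp only: sum_subtractf sum_distrib_right)
      have gen: "\<And>A B x y::ratfun. x*y + (A - B*y) = (x - B)*y + A" by (simp add: algebra_simps)
      show ?thesis by (simp only: s1 gen)
    qed
    finally show ?thesis using e by simp
  qed
  then show ?thesis unfolding expo_def by (intro exI[of _ B]) simp
qed

lemma height_mono:
  assumes "finite P" "height_fun P h"
  shows "x \<in> P \<Longrightarrow> y \<in> P \<Longrightarrow> x < y \<Longrightarrow> h x < h y"
proof (induction "card {z\<in>P. x < z \<and> z < y}" arbitrary: x y rule: less_induct)
  case less
  show ?case
  proof (cases "\<exists>z\<in>P. x < z \<and> z < y")
    case False
    then have "covers P x y" using less.prems unfolding covers_def by auto
    then show ?thesis using assms(2) unfolding height_fun_def by auto
  next
    case True
    then obtain z where z: "z \<in> P" "x < z" "z < y" by blast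
    have f: "finite {z\<in>P. x < z \<and> z < y}" using assms(1) by simp
    have "card {w\<in>P. x < w \<and> w < z} < card {z\<in>P. x < z \<and> z < y}"
      by (rule psubset_card_mono[OF f]) (use z in auto)
    then have "h x < h z" using less.hyps less.prems z by blast
    moreover have "card {w\<in>P. z < w \<and> w < y} < card {z\<in>P. x < z \<and> z < y}"
      by (rule psubset_card_mono[OF f]) (use z in auto)
    then have "h z < h y" using less.hyps less.prems z by blast
    ultimately show ?thesis by simp
  qed
qed

lemma expo_mcs:
  assumes "finite P" "\<forall>x\<in>P. \<forall>y\<in>P. x < y \<longrightarrow> h x < h y"
  shows "expo (h ` P) (mcs P h)"
  using assms
proof (induction "card P" arbitrary: P rule: less_induct)
  case less
  have each: "expo (h ` P) (\<lambda>n. qvar ^ h x * mcs {y\<in>P. x \<le> y} h (n - 1))" if x: "x \<in> P" for x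
  proof -
    let ?R = "{y\<in>P. x < y}"
    have "card ?R < card P" using x less.prems by (intro psubset_card_mono) auto
    then have IH: "expo (h ` ?R) (mcs ?R h)" using less by auto
    have "expo (insert (h x) (h ` ?R)) (\<lambda>n. qvar ^ h x * mcs {y\<in>P. x \<le> y} h (n - 1))"
    proof (rule expo_geo[OF _ _ IH])
      show "finite (h ` ?R)" using less.prems by simp
      show "h x \<notin> h ` ?R" using less.prems x by fastforce
      show "mcs {y\<in>P. x \<le> y} h 0 = 1" by (rule mcs0)
      fix k
      have e: "{y\<in>P. x \<le> y} - {x} = ?R" by auto
      have m: "mcs {y\<in>P. x \<le> y} h (Suc k) = qvar ^ h x * mcs {y\<in>P. x \<le> y} h k + mcs ({y\<in>P. x \<le> y} - {x}) h (Suc k)"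
        by (rule mcs_min) (use less.prems x in auto)
      show "mcs {y\<in>P. x \<le> y} h (Suc k) = qvar ^ h x * mcs {y\<in>P. x \<le> y} h k + mcs ?R h (Suc k)"
        using m unfolding e .
    qed
    then show ?thesis by (rule expo_mono) (use less.prems x in auto)
  qed
  have "expo (h ` P) (\<lambda>n. \<Sum>x\<in>P. qvar ^ h x * mcs {y\<in>P. x \<le> y} h (n - 1))"
    by (rule expo_sum) (use less.prems each in auto)
  then show ?case
    by (rule expo_cong) (simp add: mcs_Suc less.prems)
qed


lemma zeta_mcs: "zeta_sum P h n = mcs P h (n - 1)"
  by (simp add: zeta_sum_def mcs_def)

lemma exists_Z:
  assumes "finite P" "height_fun P h"
  shows "\<exists>Z. \<forall>n\<ge>2. poly Z (qint n) = zeta_sum P h n"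
proof -
  have "expo (h ` P) (mcs P h)"
    by (rule expo_mcs) (use assms height_mono in blast)+
  then obtain b where b: "\<And>k. mcs P h (Suc k) = (\<Sum>c\<in>h ` P. b c * (qvar ^ c) ^ k)"
    unfolding expo_def by blast
  define L where "L = [:inverse (qvar ^ 2), (qvar - 1) / qvar ^ 2:]"
  define Z where "Z = (\<Sum>c\<in>h ` P. smult (b c) (L ^ c))"
  have "poly Z (qint n) = zeta_sum P h n" if n: "n \<ge> 2" for n
  proof -
    obtain k where k: "n = Suc (Suc k)" using n by (metis add_2_eq_Suc le_Suc_ex)
    have "poly L (qint n) = (1 + (qvar - 1) * qint n) / qvar ^ 2"
      by (simp add: L_def field_simps qvar_nz)
    also have "\<dots> = qvar ^ k" using qint_eq[of n] k qvar_nz by (simp add: power2_eq_square)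
    finally have pl: "poly L (qint n) = qvar ^ k" .
    have "poly Z (qint n) = (\<Sum>c\<in>h ` P. b c * (qvar ^ k) ^ c)"
      by (simp add: Z_def poly_sum pl)
    also have "\<dots> = (\<Sum>c\<in>h ` P. b c * (qvar ^ c) ^ k)"
      by (simp add: power_mult[symmetric] mult.commute)
    also have "\<dots> = zeta_sum P h n" by (simp add: b zeta_mcs k)
    finally show ?thesis .
  qed
  then show ?thesis by blast
qed

lemma qzeta_eq:
  assumes "\<forall>n\<ge>2. poly Z (qint n) = zeta_sum P h n"
  shows "qzeta P h = Z"
  unfolding qzeta_def
  by (rule the_equality) (use assms poly_unique in auto)

theorem mainTheorem16:
  fixes P :: "'a::order set" and h :: "'a \<Rightarrow> nat"
  assumes "finite P" and "height_fun P h"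
  shows "qzeta P (\<lambda>x. h x + 1) = smult (inverse qvar) ([:1, qvar - 1:] * qzeta P h)"
proof -
  obtain Z where Z: "\<forall>n\<ge>2. poly Z (qint n) = zeta_sum P h n"
    using exists_Z[OF assms] by blast
  have qz: "qzeta P h = Z" by (rule qzeta_eq[OF Z])
  show ?thesis unfolding qz
  proof (rule qzeta_eq, intro allI impI)
    fix n :: nat assume n: "n \<ge> 2"
    have "poly (smult (inverse qvar) ([:1, qvar - 1:] * Z)) (qint n)
        = inverse qvar * (1 + (qvar - 1) * qint n) * zeta_sum P h n"
      using Z n by (simp add: algebra_simps)
    also have "\<dots> = inverse qvar * qvar ^ n * zeta_sum P h n" by (simp add: qint_eq)
    also have "\<dots> = qvar ^ (n - 1) * zeta_sum P h n"
      using n qvar_nz by (cases n) (auto simp: field_simps)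
    also have "\<dots> = zeta_sum P (\<lambda>x. h x + 1) n"
      unfolding zeta_mcs mcs_shift[of P h] ..
    finally show "poly (smult (inverse qvar) ([:1, qvar - 1:] * Z)) (qint n) = zeta_sum P (\<lambda>x. h x + 1) n" .
  qed
qed

end
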